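(* Let $\mathcal{X}$ be an instance space, $C\ge2$, $\mathcal{Y}=\{e_1,\dots,e_C\}\subset\mathbb{R}^C$, $\mathcal{H}$ a hypothesis space of functions $\mathcal{X}\to\mathcal{Y}$, $\mathcal{D}_{\mathcal{X}}$ a distribution on $\mathcal{X}$, $\rho(h_1,h_2)=\mathbb{P}_{X\sim\mathcal{D}_{\mathcal{X}}}[h_1(X)\neq h_2(X)]$, and fix $g\in\mathcal{H}$. For $x\in\mathcal{X}$ put $\mathcal{H}^{g,x}=\{h\in\mathcal{H}:h(x)\neq g(x)\}$ and $L(g,x)=\inf_{h\in\mathcal{H}^{g,x}}\rho(h,g)$. Assume $\mathcal{H}$ is Polish with metric $d_{\mathcal{H}}$, that $\rho(h,h')\le B\,d_{\mathcal{H}}(h,h')$ for all $h,h'\in\mathcal{H}$ and some $B>0$, and that a randomized procedure outputs finite sets $\mathcal{H}_1\subseteq\mathcal{H}_2\subseteq\cdots\subset\mathcal{H}$, $|\mathcal{H}_N|=N$, satisfying the following coverage condition for each $x_0\in\{x_i,x_j\}$: there exist deterministic $\alpha:\mathbb{N}\times\mathbb{R}_{\ge0}\to\mathbb{R}_{\ge0}$, $\beta:\mathbb{N}\to\mathbb{R}_{>0}$ with $\alpha(N,\varepsilon)\to0$, $\beta(N)\to0$ as $N\to\infty$ for every $\varepsilon\in(0,1)$, and $$\mathbb{P}\Big[\inf_{\substack{h^*\in\mathcal{H}^{g,x_0}\\ \rho(h^*,g)-L(g,x_0)\le\varepsilon}}\ \min_{h\in\mathcal{H}_N^{g,x_0}}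 d_{\mathcal{H}}(h^*,h)\le\tfrac1B\alpha(N,\varepsilon)\Big]\ge1-\beta(N)\quad\forall\varepsilon\in(0,1),$$ with $\mathcal{H}_N^{g,x_0}=\mathcal{H}_N\cap\mathcal{H}^{g,x_0}$. With $X_1,\dots,X_M$ i.i.d. from $\mathcal{D}_{\mathcal{X}}$ (independent of $\mathcal{H}_N$), let $L_{N,M}(g,x)=\inf_{h\in\mathcal{H}_N^{g,x}}\frac1M\sum_{k=1}^M\mathbb{I}[h(X_k)\neq g(X_k)]$. If $L(g,x_i)<L(g,x_j)$, then for any $\varepsilon>0$, $$\lim_{\min(M,N)\to\infty}\mathbb{P}\big[L_{N,M}(g,x_i)>L_{N,M}(g,x_j)+\varepsilon\big]=0,$$ where the limit is taken with $M=\omega(\log(CN))$.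
   Context: $M=\omega(\log(CN))$ means $M/\log(CN)\to\infty$. $\mathbb{I}$ is the indicator function. *)

theory Defs
  imports "HOL-Analysis.Analysis" "HOL-Probability.Probability"
begin

text \<open>Label space: the one-hot vectors e_1, ..., e_C in R^C, where C = CARD('c).\<close>
definition onehots :: "(real^'c) set" where
  "onehots = {axis i 1 | i. True}"

definition rho :: "'x measure \<Rightarrow> ('x \<Rightarrow> 'y) \<Rightarrow> ('x \<Rightarrow> 'y) \<Rightarrow> real" where
  "rho D h1 h2 = measure D {x \<in> space D. h1 x \<noteq> h2 x}"

definition disagree_set :: "('x \<Rightarrow> 'y) set \<Rightarrow> ('x \<Rightarrow> 'y) \<Rightarrow> 'x \<Rightarrow> ('x \<Rightarrow> 'y) set" where
  "disagree_set H g x = {h \<in> H. h x \<noteq> g x}"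

text \<open>L(g,x) = inf_{h \<in> H^{g,x}} rho(h,g)  (extended reals; inf of the empty set is +\<infinity>).\<close>
definition Lopt :: "'x measure \<Rightarrow> ('x \<Rightarrow> 'y) set \<Rightarrow> ('x \<Rightarrow> 'y) \<Rightarrow> 'x \<Rightarrow> ereal" where
  "Lopt D H g x = (INF h\<in>disagree_set H g x. ereal (rho D h g))"

text \<open>Empirical disagreement (1/M) sum_{k=1}^M I[h(X_k) \<noteq> g(X_k)], samples X_1..X_M = xs 0..xs (M-1).\<close>
definition emp_dis :: "nat \<Rightarrow> ('x \<Rightarrow> 'y) \<Rightarrow> ('x \<Rightarrow> 'y) \<Rightarrow> (nat \<Rightarrow> 'x) \<Rightarrow> real" where
  "emp_dis M h g xs = (1 / real M) * (\<Sum>k<M. if h (xs k) \<noteq> g (xs k) then 1 else 0)"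

definition LNM :: "('x \<Rightarrow> 'y) set \<Rightarrow> nat \<Rightarrow> ('x \<Rightarrow> 'y) \<Rightarrow> 'x \<Rightarrow> (nat \<Rightarrow> 'x) \<Rightarrow> ereal" where
  "LNM HN M g x xs = (INF h\<in>disagree_set HN g x. ereal (emp_dis M h g xs))"

end

theory Submission
  imports Defs
begin


lemma neq_set_meas:
  fixes f g :: "'a \<Rightarrow> real^'c"
  assumes "f \<in> borel_measurable M" "g \<in> borel_measurable M"
  shows "{x \<in> space M. f x \<noteq> g x} \<in> sets M"
proof -
  have "{x \<in> space M. f x \<noteq> g x} = space M - {x \<in> space M. f x = g x}" by auto
  then show ?thesis using measurable_equality_set[OF assms] by auto
qed

lemma hoeffding_emp:
  fixes D :: "'x measure" and h g :: "'x \<Rightarrow> real^'c"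
  assumes D: "prob_space D" and hm: "h \<in> borel_measurable D" and gm: "g \<in> borel_measurable D"
    and M: "M > 0" and t: "t \<ge> 0"
  shows "measure (PiM UNIV (\<lambda>_::nat. D)) {xs \<in> space (PiM UNIV (\<lambda>_::nat. D)).
            \<bar>emp_dis M h g xs - rho D h g\<bar> \<ge> t} \<le> 2 * exp (-2 * real M * t\<^sup>2)"
proof -
  interpret PP: product_prob_space "\<lambda>_::nat. D" UNIV
    by (simp add: D product_prob_space.intro product_prob_space_axioms.intro product_sigma_finite.intro prob_space_imp_sigma_finite)
  let ?Pi = "PiM UNIV (\<lambda>_::nat. D)"
  define f where "f x = (if h x \<noteq> g x then 1 else 0 :: real)" for x
  have fm[measurable]: "f \<in> borel_measurable D"
    unfolding f_def using hm gm by measurable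
  define X where "X (i::nat) (xs::nat \<Rightarrow> 'x) = f (xs i)" for i xs
  define Y where "Y (xs::nat \<Rightarrow> 'x) = f (xs 0)" for xs
  have Pim: "prob_space ?Pi" by (rule PP.P.prob_space_axioms)
  have Xm[measurable]: "X i \<in> borel_measurable ?Pi" for i unfolding X_def by measurable
  have ind0: "prob_space.indep_vars ?Pi (\<lambda>_. D) (\<lambda>i xs. xs i) {..<M}"
  proof -
    have "{..<M} \<noteq> {}" using M by auto
    moreover have "distr ?Pi (PiM {..<M} (\<lambda>_. D)) (\<lambda>x. \<lambda>i\<in>{..<M}. x i) = PiM {..<M} (\<lambda>i. distr ?Pi D (\<lambda>xs. xs i))"
      using PP.distr_PiM_restrict_finite[of "{..<M}"] PP.PiM_component by simp
    ultimately show ?thesis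
      by (subst prob_space.indep_vars_iff_distr_eq_PiM'[OF Pim]) auto
  qed
  have ind: "prob_space.indep_vars ?Pi (\<lambda>_. borel) X {..<M}"
  proof -
    have "prob_space.indep_vars ?Pi (\<lambda>_. borel) (\<lambda>i. f \<circ> (\<lambda>xs. xs i)) {..<M}"
      by (rule prob_space.indep_vars_compose[OF Pim ind0]) simp
    moreover have "X = (\<lambda>i x. f (x i))" by (simp add: X_def fun_eq_iff)
    ultimately show ?thesis by (simp add: o_def)
  qed
  interpret HI: Hoeffding_ineq_iid ?Pi "{..<M}" X Y 0 1 "integral\<^sup>L ?Pi Y"
  proof (unfold_locales)
    show "distr ?Pi borel (X i) = distr ?Pi borel Y" if "i \<in> {..<M}" for i
    proof -
      have "distr ?Pi borel (X i) = distr (distr ?Pi D (\<lambda>xs. xs i)) borel f"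
        unfolding X_def by (subst distr_distr) (auto simp: o_def)
      also have "\<dots> = distr D borel f" using PP.PiM_component by simp
      also have "\<dots> = distr (distr ?Pi D (\<lambda>xs. xs 0)) borel f" using PP.PiM_component by simp
      also have "\<dots> = distr ?Pi borel Y"
        unfolding Y_def by (subst distr_distr) (auto simp: o_def)
      finally show ?thesis .
    qed
    show "AE x in ?Pi. Y x \<in> {0..1}" by (auto simp: Y_def f_def)
    show "Y \<in> borel_measurable ?Pi" unfolding Y_def by measurable
    show "integral\<^sup>L ?Pi Y \<equiv> integral\<^sup>L ?Pi Y" by (rule reflexive)
  qed (use ind in \<open>auto\<close>)
  have EY: "integral\<^sup>L ?Pi Y = rho D h g"
  proof -
    have "integral\<^sup>L ?Pi Y = integral\<^sup>L (distr ?Pi D (\<lambda>xs. xs 0)) f"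
      unfolding Y_def by (subst integral_distr) auto
    also have "\<dots> = integral\<^sup>L D f" using PP.PiM_component by simp
    also have "\<dots> = integral\<^sup>L D (indicator {x \<in> space D. h x \<noteq> g x})"
      by (intro Bochner_Integration.integral_cong) (auto simp: f_def indicator_def)
    also have "\<dots> = rho D h g"
      using neq_set_meas[OF hm gm] by (simp add: rho_def)
    finally show ?thesis .
  qed
  have "measure ?Pi {x\<in>space ?Pi. \<bar>(\<Sum>i\<in>{..<M}. X i x) / card {..<M} - integral\<^sup>L ?Pi Y\<bar> \<ge> t} \<le>
               2 * exp (-2 * real M * t\<^sup>2)"
    using HI.Hoeffding_ineq_abs_ge'[of t] t M by (simp add: lessThan_empty_iff)
  moreover have "(\<Sum>i\<in>{..<M}. X i x) / card {..<M} = emp_dis M h g x" for x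
    by (simp add: emp_dis_def X_def f_def)
  ultimately show ?thesis by (simp add: EY)
qed
lemma pair_measure_le:
  assumes P: "prob_space P" and R: "prob_space R" and S: "S \<in> sets (P \<Otimes>\<^sub>M R)"
    and c: "c \<ge> 0" and le: "\<And>\<omega>. \<omega> \<in> space P \<Longrightarrow> measure R (Pair \<omega> -` S) \<le> c"
  shows "measure (P \<Otimes>\<^sub>M R) S \<le> c"
proof -
  interpret R: prob_space R by fact
  interpret P: prob_space P by fact
  have "emeasure (P \<Otimes>\<^sub>M R) S = (\<integral>\<^sup>+ \<omega>. emeasure R (Pair \<omega> -` S) \<partial>P)"
    by (rule R.emeasure_pair_measure_alt[OF S])
  also have "\<dots> \<le> (\<integral>\<^sup>+ \<omega>. ennreal c \<partial>P)"
    using le by (intro nn_integral_mono) (simp add: R.emeasure_eq_measure ennreal_leI)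
  also have "\<dots> = ennreal c" by (simp add: P.emeasure_space_1)
  finally have "emeasure (P \<Otimes>\<^sub>M R) S \<le> ennreal c" .
  then show ?thesis using c by (simp add: measure_def enn2real_leI)
qed

lemma rho_meas:
  fixes hh :: "'w \<Rightarrow> 'x \<Rightarrow> real^'c"
  assumes D: "prob_space D" and Ds: "space D = UNIV"
    and hm: "(\<lambda>(\<omega>, x). hh \<omega> x) \<in> borel_measurable (P \<Otimes>\<^sub>M D)"
    and gm: "g \<in> borel_measurable D"
  shows "(\<lambda>\<omega>. rho D (hh \<omega>) g) \<in> borel_measurable P"
proof -
  interpret D: prob_space D by fact
  define S where "S = {z \<in> space (P \<Otimes>\<^sub>M D). (\<lambda>(\<omega>, x). hh \<omega> x) z \<noteq> g (snd z)}"
  have gm2: "(\<lambda>z. g (snd z)) \<in> borel_measurable (P \<Otimes>\<^sub>M D)" using gm by measurable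
  have S: "S \<in> sets (P \<Otimes>\<^sub>M D)" unfolding S_def by (rule neq_set_meas[OF hm gm2])
  have "(\<lambda>\<omega>. emeasure D (Pair \<omega> -` S)) \<in> borel_measurable P"
    by (rule D.measurable_emeasure_Pair[OF S])
  then have "(\<lambda>\<omega>. enn2real (emeasure D (Pair \<omega> -` S))) \<in> borel_measurable P" by measurable
  moreover have "enn2real (emeasure D (Pair \<omega> -` S)) = rho D (hh \<omega>) g" if "\<omega> \<in> space P" for \<omega>
  proof -
    have "Pair \<omega> -` S = {x \<in> space D. hh \<omega> x \<noteq> g x}"
      using that by (auto simp: S_def space_pair_measure Ds)
    then show ?thesis by (simp add: rho_def measure_def)
  qed
  ultimately show ?thesis by (rule measurable_cong[THEN iffD1, rotated]) auto
qed

lemma emp_meas: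
  fixes hh :: "'w \<Rightarrow> 'x \<Rightarrow> real^'c"
  assumes hm: "(\<lambda>(\<omega>, x). hh \<omega> x) \<in> borel_measurable (P \<Otimes>\<^sub>M D)"
    and gm: "g \<in> borel_measurable D"
  shows "(\<lambda>z. emp_dis M (hh (fst z)) g (snd z)) \<in> borel_measurable (P \<Otimes>\<^sub>M PiM UNIV (\<lambda>_::nat. D))"
proof -
  let ?Q = "P \<Otimes>\<^sub>M PiM UNIV (\<lambda>_::nat. D)"
  have E: "{z \<in> space ?Q. hh (fst z) (snd z j) \<noteq> g (snd z j)} \<in> sets ?Q" for j
  proof -
    have m1: "(\<lambda>z. (fst z, snd z j)) \<in> measurable ?Q (P \<Otimes>\<^sub>M D)" by measurable
    have "(\<lambda>z. (\<lambda>(\<omega>, x). hh \<omega> x) (fst z, snd z j)) \<in> borel_measurable ?Q"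
      using measurable_comp[OF m1 hm] by (simp add: o_def)
    then have a: "(\<lambda>z. hh (fst z) (snd z j)) \<in> borel_measurable ?Q" by simp
    have b: "(\<lambda>z. g (snd z j)) \<in> borel_measurable ?Q" using gm by measurable
    show ?thesis by (rule neq_set_meas[OF a b])
  qed
  have eq: "emp_dis M (hh (fst z)) g (snd z) = (1 / real M) * (\<Sum>j<M. indicator {z \<in> space ?Q. hh (fst z) (snd z j) \<noteq> g (snd z j)} z)" if "z \<in> space ?Q" for z
    unfolding emp_dis_def by (intro arg_cong[where f="\<lambda>s. _ * s"] sum.cong) (auto simp: indicator_def that)
  moreover have "(\<lambda>z. (1 / real M) * (\<Sum>j<M. indicator {z \<in> space ?Q. hh (fst z) (snd z j) \<noteq> g (snd z j)} z)) \<in> borel_measurable ?Q"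
    using E by (intro borel_measurable_times borel_measurable_const borel_measurable_sum borel_measurable_indicator) auto
  then show ?thesis using eq by (rule measurable_cong[THEN iffD2, rotated]) simp
qed


lemma core:
  assumes HN: "HN \<subseteq> H"
    and dev: "\<forall>h\<in>HN. \<bar>emp_dis M h g xs - rho D h g\<bar> < t"
    and Li: "Lopt D H g xi = ereal Li"
    and Lless: "Lopt D H g xi < Lopt D H g xj"
    and h0: "h0 \<in> disagree_set HN g xi" "rho D h0 g \<le> Li + r"
    and rt: "r + 2 * t \<le> \<epsilon>"
  shows "LNM HN M g xi xs \<le> LNM HN M g xj xs + ereal \<epsilon>"
proof -
  have h0H: "h0 \<in> HN" using h0 by (simp add: disagree_set_def)
  have "LNM HN M g xi xs \<le> ereal (emp_dis M h0 g xs)"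
    unfolding LNM_def by (rule INF_lower[OF h0(1)])
  also have "\<dots> \<le> ereal (Li + r + t)" using dev h0H h0(2) by force
  finally have 1: "LNM HN M g xi xs \<le> ereal (Li + r + t)" .
  have "ereal (Li - t) \<le> LNM HN M g xj xs"
    unfolding LNM_def
  proof (rule INF_greatest)
    fix h assume h: "h \<in> disagree_set HN g xj"
    then have "h \<in> disagree_set H g xj" using HN by (auto simp: disagree_set_def)
    then have "Lopt D H g xj \<le> ereal (rho D h g)" unfolding Lopt_def by (rule INF_lower)
    with Lless Li have "ereal Li < ereal (rho D h g)" by (metis order_less_le_trans)
    then have "Li < rho D h g" by simp
    moreover have "h \<in> HN" using h by (simp add: disagree_set_def)
    ultimately show "ereal (Li - t) \<le> ereal (emp_dis M h g xs)" using dev by force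
  qed
  then have "ereal (Li - t) + ereal \<epsilon> \<le> LNM HN M g xj xs + ereal \<epsilon>"
    by (rule add_right_mono)
  moreover have "ereal (Li + r + t) \<le> ereal (Li - t) + ereal \<epsilon>" using rt by simp
  ultimately show ?thesis using 1 by (meson order_trans)
qed

lemma rho_tri:
  fixes h1 h2 h3 :: "'x \<Rightarrow> real^'c"
  assumes "h1 \<in> borel_measurable D" "h2 \<in> borel_measurable D" "h3 \<in> borel_measurable D"
    and "finite_measure D"
  shows "rho D h1 h3 \<le> rho D h1 h2 + rho D h2 h3"
proof -
  interpret finite_measure D by fact
  have s: "{x \<in> space D. f x \<noteq> g x} \<in> sets D" if "f \<in> borel_measurable D" "g \<in> borel_measurable D" for f g :: "'x \<Rightarrow> real^'c"
  proof -
    have "{x \<in> space D. f x \<noteq> g x} = space D - {x \<in> space D. f x = g x}" by auto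
    then show ?thesis using measurable_equality_set[OF that] by auto
  qed
  have "rho D h1 h3 \<le> measure D ({x \<in> space D. h1 x \<noteq> h2 x} \<union> {x \<in> space D. h2 x \<noteq> h3 x})"
    unfolding rho_def using s assms by (intro finite_measure_mono) auto
  also have "\<dots> \<le> rho D h1 h2 + rho D h2 h3"
    unfolding rho_def using s assms by (intro measure_Un_le) auto
  finally show ?thesis .
qed

lemma cover_extract:
  assumes cov: "(INF hs\<in>S. INF h\<in>T. ereal (d hs h)) \<le> ereal a"
    and da: "\<delta> > 0"
  shows "\<exists>hs\<in>S. \<exists>h\<in>T. d hs h < a + \<delta>"
proof -
  have "(INF hs\<in>S. INF h\<in>T. ereal (d hs h)) < ereal (a + \<delta>)"
  proof -
    have "ereal a < ereal (a + \<delta>)" using da by simp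
    then show ?thesis using cov by (rule order.strict_trans1[rotated])
  qed
  then obtain hs where "hs \<in> S" "(INF h\<in>T. ereal (d hs h)) < ereal (a + \<delta>)"
    by (auto simp: INF_less_iff)
  then obtain h where "h \<in> T" "ereal (d hs h) < ereal (a + \<delta>)" by (auto simp: INF_less_iff)
  then show ?thesis using \<open>hs \<in> S\<close> by auto
qed


lemma asym:
  fixes Ms Ns :: "nat \<Rightarrow> nat" and C :: nat and t :: real
  assumes C: "C \<ge> 2" and t: "t > 0" and NsL: "filterlim Ns at_top sequentially"
    and MsL: "filterlim (\<lambda>n. real (Ms n) / ln (real C * real (Ns n))) at_top sequentially"
  shows "eventually (\<lambda>n. 0 < Ms n \<and> 0 < Ns n \<and> 2 * real (Ns n) * exp (-2 * real (Ms n) * t\<^sup>2) \<le> 2 / real (Ns n)) sequentially"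
    and "(\<lambda>n. 2 / real (Ns n)) \<longlonglongrightarrow> 0"
proof -
  have e1: "eventually (\<lambda>n. Ns n \<ge> 1) sequentially"
    using NsL by (simp add: filterlim_at_top)
  have e2: "eventually (\<lambda>n. real (Ms n) / ln (real C * real (Ns n)) \<ge> 1 / t\<^sup>2) sequentially"
    using MsL by (simp add: filterlim_at_top)
  show "eventually (\<lambda>n. 0 < Ms n \<and> 0 < Ns n \<and> 2 * real (Ns n) * exp (-2 * real (Ms n) * t\<^sup>2) \<le> 2 / real (Ns n)) sequentially"
    using e1 e2
  proof eventually_elim
    case (elim n)
    define N where "N = real (Ns n)"
    define L where "L = ln (real C * N)"
    define m where "m = real (Ms n)"
    have N1: "N \<ge> 1" using elim by (simp add: N_def)
    have C2: "real C \<ge> 2" using C by simp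
    have CN: "real C * N \<ge> 2" using mult_mono[OF C2 N1] by simp
    have Lpos: "L > 0" unfolding L_def using CN by simp
    have "m / L \<ge> 1 / t\<^sup>2" using elim by (simp add: m_def L_def N_def)
    then have mL: "m * t\<^sup>2 \<ge> L" using Lpos t by (simp add: field_simps)
    have "m \<ge> 0" by (simp add: m_def)
    then have "m > 0" using Lpos mL by (cases "m = 0") auto
    have "exp (-2 * m * t\<^sup>2) \<le> exp (-2 * L)" using mL by simp
    also have "exp (-2 * L) = 1 / (real C * N)\<^sup>2"
    proof -
      have "exp (-2 * L) = inverse (exp L * exp L)" by (simp add: exp_minus exp_add[symmetric])
      also have "exp L = real C * N" unfolding L_def using CN by simp
      finally show ?thesis by (simp add: power2_eq_square divide_inverse)
    qed
    finally have ex: "exp (-2 * m * t\<^sup>2) \<le> 1 / (real C * N)\<^sup>2" .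
    have "2 * N * exp (-2 * m * t\<^sup>2) \<le> 2 * N * (1 / (real C * N)\<^sup>2)"
      using ex N1 by (intro mult_left_mono) auto
    also have "\<dots> \<le> 2 / N"
    proof -
      have "2 * N * (1 / (real C * N)\<^sup>2) = 2 / (N * (real C)\<^sup>2)" using N1 by (simp add: power2_eq_square field_simps)
      also have "\<dots> \<le> 2 / N"
      proof (rule divide_left_mono)
        have "(real C)\<^sup>2 \<ge> 1" using C2 by (simp add: one_le_power)
        then show "N \<le> N * (real C)\<^sup>2" using N1 by (simp add: mult_le_cancel_left1)
      qed (use N1 C2 in auto)
      finally show ?thesis .
    qed
    finally show ?case using \<open>m > 0\<close> N1 by (simp add: m_def N_def)
  qed
  have "filterlim (\<lambda>n. real (Ns n)) at_top sequentially"
    by (rule filterlim_compose[OF filterlim_real_sequentially NsL])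
  then show "(\<lambda>n. 2 / real (Ns n)) \<longlonglongrightarrow> 0"
    by (intro tendsto_divide_0[OF tendsto_const]) (simp add: filterlim_at_top_imp_at_infinity)
qed
theorem corollary1:
  fixes D :: "'x measure"
    and P :: "'w measure"
    and H :: "('x \<Rightarrow> real^'c) set"
    and d :: "('x \<Rightarrow> real^'c) \<Rightarrow> ('x \<Rightarrow> real^'c) \<Rightarrow> real"
    and B :: real
    and g :: "'x \<Rightarrow> real^'c"
    and hN :: "'w \<Rightarrow> nat \<Rightarrow> 'x \<Rightarrow> real^'c"
    and xi xj :: 'x
    and \<epsilon> :: real
  assumes C2: "CARD('c) \<ge> 2"
    and D_prob: "prob_space D" and D_space: "space D = UNIV"
    and H_vals: "\<forall>h\<in>H. \<forall>x. h x \<in> onehots"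
    and H_meas: "\<forall>h\<in>H. h \<in> borel_measurable D"
    and g_in: "g \<in> H"
    and polish: "Metric_space H d" "Metric_space.mcomplete H d"
                "separable_space (Metric_space.mtopology H d)"
    and B_pos: "B > 0"
    and lip: "\<forall>h\<in>H. \<forall>h'\<in>H. rho D h h' \<le> B * d h h'"
    and P_prob: "prob_space P"
    and hN_in: "\<forall>\<omega>\<in>space P. \<forall>n. hN \<omega> n \<in> H"
    and hN_inj: "\<forall>\<omega>\<in>space P. inj (hN \<omega>)"
    and hN_meas: "\<forall>n. (\<lambda>(\<omega>, x). hN \<omega> n x) \<in> borel_measurable (P \<Otimes>\<^sub>M D)"
    and coverage: "\<forall>x0\<in>{xi, xj}. \<exists>(\<alpha> :: nat \<Rightarrow> real \<Rightarrow> real) (\<beta> :: nat \<Rightarrow> real).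
         (\<forall>N e. e \<ge> 0 \<longrightarrow> \<alpha> N e \<ge> 0) \<and> (\<forall>N. \<beta> N > 0) \<and>
         (\<forall>e\<in>{0<..<1}. (\<lambda>N. \<alpha> N e) \<longlonglongrightarrow> 0) \<and> \<beta> \<longlonglongrightarrow> 0 \<and>
         (\<forall>N. \<forall>e\<in>{0<..<1}. \<exists>A\<in>sets P. measure P A \<ge> 1 - \<beta> N \<and>
            (\<forall>\<omega>\<in>A.
              (INF hs\<in>{hs \<in> disagree_set H g x0. ereal (rho D hs g) - Lopt D H g x0 \<le> ereal e}.
                 INF h\<in>disagree_set (hN \<omega> ` {..<N}) g x0. ereal (d hs h))
              \<le> ereal (\<alpha> N e / B)))"
    and Lless: "Lopt D H g xi < Lopt D H g xj"
    and eps: "\<epsilon> > 0"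
  shows "\<forall>(Ms :: nat \<Rightarrow> nat) (Ns :: nat \<Rightarrow> nat).
           filterlim Ns at_top sequentially \<and>
           filterlim (\<lambda>n. real (Ms n) / ln (real CARD('c) * real (Ns n))) at_top sequentially
           \<longrightarrow> (\<exists>A :: nat \<Rightarrow> ('w \<times> (nat \<Rightarrow> 'x)) set.
                 (\<forall>n. A n \<in> sets (P \<Otimes>\<^sub>M PiM UNIV (\<lambda>_::nat. D)) \<and>
                      {z \<in> space (P \<Otimes>\<^sub>M PiM UNIV (\<lambda>_::nat. D)).
                         LNM (hN (fst z) ` {..<Ns n}) (Ms n) g xi (snd z)
                           > LNM (hN (fst z) ` {..<Ns n}) (Ms n) g xj (snd z) + ereal \<epsilon>}
                      \<subseteq> A n) \<and>
                 (\<lambda>n. measure (P \<Otimes>\<^sub>M PiM UNIV (\<lambda>_::nat. D)) (A n)) \<longlonglongrightarrow> 0)"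
  proof (intro allI impI)
  fix Ms Ns :: "nat \<Rightarrow> nat"
  assume lim: "filterlim Ns at_top sequentially \<and>
           filterlim (\<lambda>n. real (Ms n) / ln (real CARD('c) * real (Ns n))) at_top sequentially"
  then have NsL: "filterlim Ns at_top sequentially"
    and MsL: "filterlim (\<lambda>n. real (Ms n) / ln (real CARD('c) * real (Ns n))) at_top sequentially" by auto
  interpret P: prob_space P by (rule P_prob)
  interpret D: prob_space D by (rule D_prob)
  let ?R = "PiM UNIV (\<lambda>_::nat. D)"
  let ?Q = "P \<Otimes>\<^sub>M ?R"
  have Rp: "prob_space ?R" by (rule prob_space_PiM) (simp add: D_prob)
  interpret R: prob_space ?R by (rule Rp)
  interpret PR: pair_prob_space P ?R by unfold_locales
  have gm[measurable]: "g \<in> borel_measurable D" using H_meas g_in by auto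
  have L0: "Lopt D H g xi \<ge> 0" unfolding Lopt_def by (rule INF_greatest) (simp add: rho_def)
  have Lfin: "Lopt D H g xi \<noteq> \<infinity>" using Lless by auto
  obtain Li where Li: "Lopt D H g xi = ereal Li" using L0 Lfin by (cases "Lopt D H g xi") auto
  define t where "t = \<epsilon> / 4"
  define e where "e = min (\<epsilon> / 4) (1/2)"
  have t0: "t > 0" using eps by (simp add: t_def)
  have e01: "e \<in> {0<..<1}" using eps by (auto simp: e_def)
  obtain \<alpha> \<beta> where ab: "\<forall>N e. e \<ge> 0 \<longrightarrow> \<alpha> N e \<ge> 0" "\<forall>N. \<beta> N > 0"
      "\<forall>e\<in>{0<..<1}. (\<lambda>N. \<alpha> N e) \<longlonglongrightarrow> 0" "\<beta> \<longlonglongrightarrow> 0"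
      "\<forall>N. \<forall>e\<in>{0<..<1}. \<exists>A\<in>sets P. measure P A \<ge> 1 - \<beta> N \<and>
            (\<forall>\<omega>\<in>A.
              (INF hs\<in>{hs \<in> disagree_set H g xi. ereal (rho D hs g) - Lopt D H g xi \<le> ereal e}.
                 INF h\<in>disagree_set (hN \<omega> ` {..<N}) g xi. ereal (d hs h))
              \<le> ereal (\<alpha> N e / B))"
    using bspec[OF coverage insertI1] by blast
  have "\<forall>N. \<exists>A. A \<in> sets P \<and> measure P A \<ge> 1 - \<beta> N \<and>
            (\<forall>\<omega>\<in>A.
              (INF hs\<in>{hs \<in> disagree_set H g xi. ereal (rho D hs g) - Lopt D H g xi \<le> ereal e}.
                 INF h\<in>disagree_set (hN \<omega> ` {..<N}) g xi. ereal (d hs h))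
              \<le> ereal (\<alpha> N e / B))"
    using ab(5) e01 by blast
  note exA = this
  then obtain Acov where Acov: "\<And>N. Acov N \<in> sets P" "\<And>N. measure P (Acov N) \<ge> 1 - \<beta> N"
    "\<And>N \<omega>. \<omega> \<in> Acov N \<Longrightarrow>
              (INF hs\<in>{hs \<in> disagree_set H g xi. ereal (rho D hs g) - Lopt D H g xi \<le> ereal e}.
                 INF h\<in>disagree_set (hN \<omega> ` {..<N}) g xi. ereal (d hs h))
              \<le> ereal (\<alpha> N e / B)"
  proof -
    from choice[OF exA] obtain Acov where Acov0: "\<forall>N. Acov N \<in> sets P \<and> measure P (Acov N) \<ge> 1 - \<beta> N \<and>
            (\<forall>\<omega>\<in>Acov N.
              (INF hs\<in>{hs \<in> disagree_set H g xi. ereal (rho D hs g) - Lopt D H g xi \<le> ereal e}.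
                 INF h\<in>disagree_set (hN \<omega> ` {..<N}) g xi. ereal (d hs h))
              \<le> ereal (\<alpha> N e / B))" by blast
    show ?thesis by (rule that[of Acov]) (use Acov0 in blast)+
  qed
  define Dk where "Dk n k = {z \<in> space ?Q. t \<le> \<bar>emp_dis (Ms n) (hN (fst z) k) g (snd z) - rho D (hN (fst z) k) g\<bar>}" for n k
  define good where "good n \<longleftrightarrow> \<alpha> (Ns n) e \<le> \<epsilon> / 8 \<and> 0 < Ms n \<and> 0 < Ns n" for n
  define A where "A n = (if good n then ((space P - Acov (Ns n)) \<times> space ?R) \<union> (\<Union>k<Ns n. Dk n k) else space ?Q)" for n
  have Dk_meas: "Dk n k \<in> sets ?Q" for n k
  proof -
    have hm: "(\<lambda>(\<omega>, x). hN \<omega> k x) \<in> borel_measurable (P \<Otimes>\<^sub>M D)" using hN_meas by auto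
    have [measurable]: "(\<lambda>z. emp_dis (Ms n) (hN (fst z) k) g (snd z)) \<in> borel_measurable ?Q"
      by (rule emp_meas[OF hm gm])
    have r[measurable]: "(\<lambda>\<omega>. rho D (hN \<omega> k) g) \<in> borel_measurable P"
      by (rule rho_meas[OF D_prob D_space hm gm])
    have [measurable]: "(\<lambda>z. rho D (hN (fst z) k) g) \<in> borel_measurable ?Q"
      by measurable
    show ?thesis unfolding Dk_def by measurable
  qed
  have A_meas: "A n \<in> sets ?Q" for n
    unfolding A_def using Dk_meas Acov(1) by (auto intro!: pair_measureI)
  have incl: "{z \<in> space ?Q. LNM (hN (fst z) ` {..<Ns n}) (Ms n) g xi (snd z)
                 > LNM (hN (fst z) ` {..<Ns n}) (Ms n) g xj (snd z) + ereal \<epsilon>} \<subseteq> A n" for n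
  proof
    fix z assume z: "z \<in> {z \<in> space ?Q. LNM (hN (fst z) ` {..<Ns n}) (Ms n) g xi (snd z)
                 > LNM (hN (fst z) ` {..<Ns n}) (Ms n) g xj (snd z) + ereal \<epsilon>}"
    show "z \<in> A n"
    proof (cases "good n")
      case False then show ?thesis using z by (simp add: A_def)
    next
      case True
      show ?thesis
      proof (rule ccontr)
        assume nA: "z \<notin> A n"
        obtain \<omega> xs where zw: "z = (\<omega>, xs)" by (cases z)
        have \<omega>P: "\<omega> \<in> space P" and xsR: "xs \<in> space ?R" using z zw by (auto simp: space_pair_measure)
        have nA1: "z \<notin> (space P - Acov (Ns n)) \<times> space ?R" and nA2: "\<And>k. k < Ns n \<Longrightarrow> z \<notin> Dk n k"
          using nA True unfolding A_def by simp_all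
        have \<omega>A: "\<omega> \<in> Acov (Ns n)" using nA1 \<omega>P xsR zw by blast
        have zQ: "z \<in> space ?Q" using z by blast
        have dev: "\<forall>h\<in>hN \<omega> ` {..<Ns n}. \<bar>emp_dis (Ms n) h g xs - rho D h g\<bar> < t"
        proof
          fix h assume "h \<in> hN \<omega> ` {..<Ns n}"
          then obtain k where k: "k < Ns n" "h = hN \<omega> k" by auto
          have "z \<notin> Dk n k" using nA2 k(1) .
          then have "\<not> t \<le> \<bar>emp_dis (Ms n) (hN (fst z) k) g (snd z) - rho D (hN (fst z) k) g\<bar>"
            using zQ unfolding Dk_def by blast
          then show "\<bar>emp_dis (Ms n) h g xs - rho D h g\<bar> < t" using k zw by simp
        qed
        have HN: "hN \<omega> ` {..<Ns n} \<subseteq> H" using hN_in \<omega>P by auto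
        have "\<exists>hs\<in>{hs \<in> disagree_set H g xi. ereal (rho D hs g) - Lopt D H g xi \<le> ereal e}.
                \<exists>h\<in>disagree_set (hN \<omega> ` {..<Ns n}) g xi. d hs h < \<alpha> (Ns n) e / B + \<epsilon> / (8 * B)"
          by (rule cover_extract[OF Acov(3)[OF \<omega>A]]) (use eps B_pos in auto)
        then obtain hs h where hs: "hs \<in> disagree_set H g xi" "ereal (rho D hs g) - ereal Li \<le> ereal e"
          and h: "h \<in> disagree_set (hN \<omega> ` {..<Ns n}) g xi" and dh: "d hs h < \<alpha> (Ns n) e / B + \<epsilon> / (8 * B)"
          using Li by auto
        have hsH: "hs \<in> H" using hs by (simp add: disagree_set_def)
        have hH: "h \<in> H" using h HN by (auto simp: disagree_set_def)
        have rhs: "rho D hs g \<le> Li + e" using hs(2) by simp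
        have "rho D h hs \<le> B * d h hs" using lip hH hsH by auto
        also have "d h hs = d hs h" using Metric_space.commute[OF polish(1)] hH hsH by metis
        also have "B * d hs h < \<alpha> (Ns n) e + \<epsilon> / 8"
          using dh B_pos by (simp add: field_simps)
        finally have rhh: "rho D h hs < \<alpha> (Ns n) e + \<epsilon> / 8" .
        have "rho D h g \<le> rho D h hs + rho D hs g"
          by (rule rho_tri) (use H_meas hH hsH g_in in \<open>auto intro: D.finite_measure_axioms\<close>)
        then have "rho D h g \<le> Li + (e + \<alpha> (Ns n) e + \<epsilon> / 8)" using rhh rhs by simp
        moreover have "(e + \<alpha> (Ns n) e + \<epsilon> / 8) + 2 * t \<le> \<epsilon>"
        proof -
          have "e \<le> \<epsilon> / 4" by (simp add: e_def)
          moreover have "\<alpha> (Ns n) e \<le> \<epsilon> / 8" using True by (simp add: good_def)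
          ultimately show ?thesis by (simp add: t_def)
        qed
        ultimately have "LNM (hN \<omega> ` {..<Ns n}) (Ms n) g xi xs \<le> LNM (hN \<omega> ` {..<Ns n}) (Ms n) g xj xs + ereal \<epsilon>"
          using core[OF HN dev Li Lless h] by blast
        moreover have "LNM (hN \<omega> ` {..<Ns n}) (Ms n) g xi xs > LNM (hN \<omega> ` {..<Ns n}) (Ms n) g xj xs + ereal \<epsilon>"
          using z zw by simp
        ultimately show False by simp
      qed
    qed
  qed
  have bound: "measure ?Q (A n) \<le> \<beta> (Ns n) + 2 * real (Ns n) * exp (-2 * real (Ms n) * t\<^sup>2)"
    if gn: "good n" for n
  proof -
    have Dkb: "measure ?Q (Dk n k) \<le> 2 * exp (-2 * real (Ms n) * t\<^sup>2)" for k
    proof (rule pair_measure_le[OF P_prob Rp Dk_meas])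
      fix \<omega> assume \<omega>P: "\<omega> \<in> space P"
      have "Pair \<omega> -` Dk n k = {xs \<in> space ?R. t \<le> \<bar>emp_dis (Ms n) (hN \<omega> k) g xs - rho D (hN \<omega> k) g\<bar>}"
        using \<omega>P by (auto simp: Dk_def space_pair_measure)
      moreover have "hN \<omega> k \<in> borel_measurable D" using hN_in H_meas \<omega>P by auto
      ultimately show "measure ?R (Pair \<omega> -` Dk n k) \<le> 2 * exp (-2 * real (Ms n) * t\<^sup>2)"
        using hoeffding_emp[OF D_prob _ gm, of "hN \<omega> k" "Ms n" t] gn t0 by (simp add: good_def)
    qed simp
    have c: "measure ?Q ((space P - Acov (Ns n)) \<times> space ?R) = 1 - measure P (Acov (Ns n))"
    proof -
      have "emeasure ?Q ((space P - Acov (Ns n)) \<times> space ?R) = emeasure P (space P - Acov (Ns n)) * emeasure ?R (space ?R)"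
        using Acov(1) by (intro R.emeasure_pair_measure_Times) auto
      then have "measure ?Q ((space P - Acov (Ns n)) \<times> space ?R) = measure P (space P - Acov (Ns n))"
        by (simp add: PR.emeasure_eq_measure P.emeasure_eq_measure R.emeasure_space_1 measure_nonneg)
      then show ?thesis using Acov(1) P.prob_compl by simp
    qed
    have "measure ?Q (A n) \<le> measure ?Q ((space P - Acov (Ns n)) \<times> space ?R) + measure ?Q (\<Union>k<Ns n. Dk n k)"
      unfolding A_def using gn Dk_meas Acov(1) by (simp, intro measure_Un_le) (auto intro!: pair_measureI)
    also have "\<dots> \<le> (1 - measure P (Acov (Ns n))) + (\<Sum>k<Ns n. measure ?Q (Dk n k))"
      using c measure_UNION_le[of "{..<Ns n}" "Dk n" ?Q] Dk_meas by simp
    also have "\<dots> \<le> \<beta> (Ns n) + (\<Sum>k<Ns n. 2 * exp (-2 * real (Ms n) * t\<^sup>2))"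
      using Acov(2)[of "Ns n"] Dkb by (intro add_mono sum_mono) auto
    finally show ?thesis by simp
  qed
  have as: "eventually (\<lambda>n. 0 < Ms n \<and> 0 < Ns n \<and> 2 * real (Ns n) * exp (-2 * real (Ms n) * t\<^sup>2) \<le> 2 / real (Ns n)) sequentially"
    and as2: "(\<lambda>n. 2 / real (Ns n)) \<longlonglongrightarrow> 0"
    using asym[OF C2 t0 NsL MsL] by auto
  have "(\<lambda>n. \<alpha> (Ns n) e) \<longlonglongrightarrow> 0"
    using filterlim_compose[OF ab(3)[rule_format, OF e01] NsL] by simp
  then have ev\<alpha>: "eventually (\<lambda>n. \<alpha> (Ns n) e < \<epsilon> / 8) sequentially"
    using eps by (intro order_tendstoD(2)) auto
  have b0: "(\<lambda>n. \<beta> (Ns n)) \<longlonglongrightarrow> 0"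
    using filterlim_compose[OF ab(4) NsL] by simp
  have "(\<lambda>n. measure ?Q (A n)) \<longlonglongrightarrow> 0"
  proof (rule tendsto_sandwich[of "\<lambda>_. 0" _ _ "\<lambda>n. \<beta> (Ns n) + 2 / real (Ns n)"])
    show "eventually (\<lambda>n. 0 \<le> measure ?Q (A n)) sequentially" by simp
    show "eventually (\<lambda>n. measure ?Q (A n) \<le> \<beta> (Ns n) + 2 / real (Ns n)) sequentially"
      using as ev\<alpha>
    proof eventually_elim
      case (elim n)
      then have "good n" by (simp add: good_def)
      then show ?case using bound[of n] elim by linarith
    qed
    show "(\<lambda>n. \<beta> (Ns n) + 2 / real (Ns n)) \<longlonglongrightarrow> 0"
      using tendsto_add[OF b0 as2] by simp
  qed simp
  then show "\<exists>A :: nat \<Rightarrow> ('w \<times> (nat \<Rightarrow> 'x)) set.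
                 (\<forall>n. A n \<in> sets (P \<Otimes>\<^sub>M PiM UNIV (\<lambda>_::nat. D)) \<and>
                      {z \<in> space (P \<Otimes>\<^sub>M PiM UNIV (\<lambda>_::nat. D)).
                         LNM (hN (fst z) ` {..<Ns n}) (Ms n) g xi (snd z)
                           > LNM (hN (fst z) ` {..<Ns n}) (Ms n) g xj (snd z) + ereal \<epsilon>}
                      \<subseteq> A n) \<and>
                 (\<lambda>n. measure (P \<Otimes>\<^sub>M PiM UNIV (\<lambda>_::nat. D)) (A n)) \<longlonglongrightarrow> 0"
    using A_meas incl by blast
qed

end
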